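(* Let $A=(a_{ij})\in\mathbb{Z}^{d\times n}$ with $\Delta:=\max_{i,j}|a_{ij}|\ge 1$, $b\in\mathbb{Z}^d$, $u\in\mathbb{Z}^n_{\ge0}$, $U:=\sum_{j=1}^n u_j$, and $$M:=\Delta U+\max(\|b\|_\infty,\|u\|_\infty)+\Delta+2.$$ Then a vector $(x,s)\in\mathbb{Z}^{n}_{\ge0}\times\mathbb{Z}^{n+1}_{\ge 0}$ (with $x=(x_1,\dots,x_n)$, $s=(s_1,\dots,s_{n+1})$) satisfies the system $$\sum_{j=1}^n a_{ij}x_j=b_i\ (i\in[d]),\qquad x_j+s_j=u_j\ (j\in[n]),\qquad \sum_{j=1}^n(x_j+s_j)+s_{n+1}=U$$ if and only if it satisfies the single equation $$\sum_{i=1}^d M^{i-1}\sum_{j=1}^n a_{ij}x_j+\sum_{j=1}^n M^{d+j-1}(x_j+s_j)+M^{d+n}\Big(\sum_{j=1}^n(x_j+s_j)+s_{n+1}\Big)=\sum_{i=1}^d M^{i-1}b_i+\sum_{j=1}^n M^{d+j-1}u_j+M^{d+n}U.$$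
   Context: $[n]=\{1,\dots,n\}$. The system encodes the ILP constraints $Ax=b$, $0\le x\le u$ with slack variables $s_j$. *)

theory Defs
  imports Main
begin

text \<open>Matrices/vectors are functions on 1-based indices; only the values on
  i in {1..d}, j in {1..n} (resp. {1..n+1} for s) matter.\<close>

definition maxabs_entry :: "(nat \<Rightarrow> nat \<Rightarrow> int) \<Rightarrow> nat \<Rightarrow> nat \<Rightarrow> int" where
  "maxabs_entry A d n = Max {\<bar>A i j\<bar> | i j. i \<in> {1..d} \<and> j \<in> {1..n}}"

definition supnorm :: "(nat \<Rightarrow> int) \<Rightarrow> nat \<Rightarrow> int" where
  "supnorm v k = Max ((\<lambda>i. \<bar>v i\<bar>) ` {1..k})"

end

theory Submission
  imports Defs
begin

lemma digits:
  fixes M :: int and c :: "nat \<Rightarrow> int"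
  assumes "M \<ge> 2" "\<forall>k<N. \<bar>c k\<bar> < M" "(\<Sum>k<N. M ^ k * c k) = 0"
  shows "\<forall>k<N. c k = 0"
  using assms(2,3)
proof (induction N arbitrary: c)
  case 0 then show ?case by simp
next
  case (Suc N)
  have eq: "(\<Sum>k<Suc N. M ^ k * c k) = c 0 + M * (\<Sum>k<N. M ^ k * c (Suc k))"
    by (subst sum.lessThan_Suc_shift) (simp add: sum_distrib_left mult.assoc)
  have "c 0 = - (M * (\<Sum>k<N. M ^ k * c (Suc k)))" using Suc.prems(2) eq by linarith
  define q where "q = - (\<Sum>k<N. M ^ k * c (Suc k))"
  have q: "c 0 = M * q" unfolding q_def using \<open>c 0 = _\<close> by (simp only: mult_minus_right)
  moreover have "\<bar>c 0\<bar> < M" using Suc.prems(1) by auto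
  ultimately have c0: "c 0 = 0"
  proof -
    have "q = 0"
    proof (rule ccontr)
      assume "q \<noteq> 0"
      then have "\<bar>q\<bar> \<ge> 1" by simp
      then have "M * 1 \<le> M * \<bar>q\<bar>" using assms(1) by (intro mult_left_mono) auto
      moreover have "\<bar>M * q\<bar> = M * \<bar>q\<bar>" using assms(1) by (simp add: abs_mult)
      ultimately have "\<bar>M * q\<bar> \<ge> M" by linarith
      then show False using q \<open>\<bar>c 0\<bar> < M\<close> by linarith
    qed
    then show ?thesis using q by simp
  qed
  have "M * (\<Sum>k<N. M ^ k * c (Suc k)) = 0" using Suc.prems(2) eq c0 by linarith
  then have "(\<Sum>k<N. M ^ k * c (Suc k)) = 0" using assms(1) by simp
  moreover have "\<forall>k<N. \<bar>c (Suc k)\<bar> < M" using Suc.prems(1) by simp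
  ultimately have "\<forall>k<N. c (Suc k) = 0" using Suc.IH[of "\<lambda>k. c (Suc k)"] by blast
  then show ?case using c0
  proof (intro allI impI)
    fix k assume "k < Suc N"
    then show "c k = 0" using c0 \<open>\<forall>k<N. c (Suc k) = 0\<close> by (cases k) auto
  qed
qed

lemma geom: "(M::int) ^ d - 1 = (M - 1) * (\<Sum>i=1..d. M ^ (i - 1))"
  by (simp add: power_diff_1_eq sum.atLeast1_atMost_eq)

lemma geom2: "(\<Sum>i=1..d. (M::int) ^ (i - 1) * (M - 1)) = M ^ d - 1"
proof -
  have "(\<Sum>i=1..d. M ^ (i - 1) * (M - 1)) = (\<Sum>i=1..d. M ^ (i - 1)) * (M - 1)"
    by (rule sum_distrib_right[symmetric])
  also have "\<dots> = (M - 1) * (\<Sum>i=1..d. M ^ (i - 1))" by (rule mult.commute)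
  also have "\<dots> = M ^ d - 1" by (rule geom[symmetric])
  finally show ?thesis .
qed

theorem mainTheorem2:
  fixes A :: "nat \<Rightarrow> nat \<Rightarrow> int" and b u x s :: "nat \<Rightarrow> int" and d n :: nat
  assumes "d \<ge> 1" and "n \<ge> 1"
    and "maxabs_entry A d n \<ge> 1"
    and "\<forall>j\<in>{1..n}. u j \<ge> 0"
    and "\<forall>j\<in>{1..n}. x j \<ge> 0"
    and "\<forall>j\<in>{1..n+1}. s j \<ge> 0"
  defines "U \<equiv> (\<Sum>j=1..n. u j)"
  defines "M \<equiv> maxabs_entry A d n * U + max (supnorm b d) (supnorm u n) + maxabs_entry A d n + 2"
  shows "((\<forall>i\<in>{1..d}. (\<Sum>j=1..n. A i j * x j) = b i)
          \<and> (\<forall>j\<in>{1..n}. x j + s j = u j)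
          \<and> (\<Sum>j=1..n. x j + s j) + s (n+1) = U)
     \<longleftrightarrow>
         ((\<Sum>i=1..d. M ^ (i - 1) * (\<Sum>j=1..n. A i j * x j))
          + (\<Sum>j=1..n. M ^ (d + j - 1) * (x j + s j))
          + M ^ (d + n) * ((\<Sum>j=1..n. x j + s j) + s (n+1))
          = (\<Sum>i=1..d. M ^ (i - 1) * b i)
          + (\<Sum>j=1..n. M ^ (d + j - 1) * u j)
          + M ^ (d + n) * U)"
proof -
  define D where "D = maxabs_entry A d n"
  define B where "B = supnorm b d"
  define Um where "Um = supnorm u n"
  define R where "R i = (\<Sum>j=1..n. A i j * x j)" for i
  define Y where "Y = (\<Sum>j=1..n. x j + s j)"
  define T where "T = Y + s (n+1)"
  define X where "X = (\<Sum>j=1..n. x j)"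
  have Mdef: "M = D * U + max B Um + D + 2" unfolding M_def D_def B_def Um_def by simp
  have fin: "finite {\<bar>A i j\<bar> | i j. i \<in> {1..d} \<and> j \<in> {1..n}}"
    by (rule finite_image_set2) auto
  have hA: "\<bar>A i j\<bar> \<le> D" if "i \<in> {1..d}" "j \<in> {1..n}" for i j
    unfolding D_def maxabs_entry_def
    by (rule Max_ge[OF fin]) (use that in blast)
  have hB: "\<bar>b i\<bar> \<le> B" if "i \<in> {1..d}" for i
    unfolding B_def supnorm_def by (rule Max_ge) (use that in auto)
  have hUm: "\<bar>u j\<bar> \<le> Um" if "j \<in> {1..n}" for j
    unfolding Um_def supnorm_def by (rule Max_ge) (use that in auto)
  have D1: "D \<ge> 1" using assms(3) D_def by simp
  have B0: "B \<ge> 0" using hB[of 1] assms(1) by force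
  have Um0: "Um \<ge> 0" using hUm[of 1] assms(2) by force
  have U0: "U \<ge> 0" unfolding U_def using assms(4) by (intro sum_nonneg) auto
  have DU: "D * U \<ge> U" using D1 U0 by (metis mult_right_mono mult_1)
  have DU0: "D * U \<ge> 0" using DU U0 by linarith
  have MB: "M \<ge> D * U + B + D + 2" using Mdef by linarith
  have MUm: "M \<ge> D * U + Um + D + 2" using Mdef by linarith
  have M2: "M \<ge> 2" using MB DU0 B0 D1 by linarith
  have M0: "M > 0" using M2 by linarith
  have x0: "x j \<ge> 0" if "j \<in> {1..n}" for j using assms(5) that by blast
  have s0: "s j \<ge> 0" if "j \<in> {1..n}" for j using assms(6) that by auto
  have sn0: "s (n+1) \<ge> 0" using assms(6) by auto
  have X0: "X \<ge> 0" unfolding X_def using x0 by (intro sum_nonneg) auto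
  have geomd: "(\<Sum>i=1..d. M ^ (i - 1) * (M - 1)) = M ^ d - 1"
    by (rule geom2)
  have geomn: "(\<Sum>j=1..n. M ^ (d + j - 1) * (M - 1)) = M ^ d * (M ^ n - 1)"
  proof -
    have "(\<Sum>j=1..n. M ^ (d + j - 1) * (M - 1)) = (\<Sum>j=1..n. M ^ d * (M ^ (j - 1) * (M - 1)))"
    proof (rule sum.cong)
      fix j assume "j \<in> {1..n}"
      then have "d + j - 1 = d + (j - 1)" by auto
      then show "M ^ (d + j - 1) * (M - 1) = M ^ d * (M ^ (j - 1) * (M - 1))"
        by (simp add: power_add)
    qed simp
    also have "\<dots> = M ^ d * (\<Sum>j=1..n. M ^ (j - 1) * (M - 1))" by (simp add: sum_distrib_left)
    also have "(\<Sum>j=1..n. M ^ (j - 1) * (M - 1)) = M ^ n - 1"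
      by (rule geom2)
    finally show ?thesis by simp
  qed
  have absR: "\<bar>R i\<bar> \<le> D * X" if "i \<in> {1..d}" for i
  proof -
    have "\<bar>R i\<bar> \<le> (\<Sum>j=1..n. \<bar>A i j * x j\<bar>)" unfolding R_def by (rule sum_abs)
    also have "\<dots> \<le> (\<Sum>j=1..n. D * x j)"
    proof (rule sum_mono)
      fix j assume j: "j \<in> {1..n}"
      have "\<bar>A i j * x j\<bar> = \<bar>A i j\<bar> * x j" using x0[OF j] by (simp add: abs_mult)
      also have "\<dots> \<le> D * x j" using hA[OF that j] x0[OF j] by (rule mult_right_mono)
      finally show "\<bar>A i j * x j\<bar> \<le> D * x j" .
    qed
    also have "\<dots> = D * X" unfolding X_def by (simp add: sum_distrib_left)
    finally show ?thesis .
  qed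
  have YT: "Y \<le> T" unfolding T_def using sn0 by linarith
  have XY: "X \<le> Y" unfolding X_def Y_def using s0 by (intro sum_mono) auto
  have yY: "x j + s j \<le> Y" if "j \<in> {1..n}" for j
    unfolding Y_def using that x0 s0
    by (intro member_le_sum[where f="\<lambda>j. x j + s j"]) (auto intro: add_nonneg_nonneg)
  have goal: "((\<forall>i\<in>{1..d}. R i = b i) \<and> (\<forall>j\<in>{1..n}. x j + s j = u j) \<and> T = U)
     \<longleftrightarrow> ((\<Sum>i=1..d. M ^ (i - 1) * R i) + (\<Sum>j=1..n. M ^ (d + j - 1) * (x j + s j)) + M ^ (d + n) * T
          = (\<Sum>i=1..d. M ^ (i - 1) * b i) + (\<Sum>j=1..n. M ^ (d + j - 1) * u j) + M ^ (d + n) * U)"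
  proof
    assume H: "(\<forall>i\<in>{1..d}. R i = b i) \<and> (\<forall>j\<in>{1..n}. x j + s j = u j) \<and> T = U"
    have "(\<Sum>i=1..d. M ^ (i - 1) * R i) = (\<Sum>i=1..d. M ^ (i - 1) * b i)"
      using H by (intro sum.cong) auto
    moreover have "(\<Sum>j=1..n. M ^ (d + j - 1) * (x j + s j)) = (\<Sum>j=1..n. M ^ (d + j - 1) * u j)"
      using H by (intro sum.cong) auto
    ultimately show "(\<Sum>i=1..d. M ^ (i - 1) * R i) + (\<Sum>j=1..n. M ^ (d + j - 1) * (x j + s j)) + M ^ (d + n) * T
          = (\<Sum>i=1..d. M ^ (i - 1) * b i) + (\<Sum>j=1..n. M ^ (d + j - 1) * u j) + M ^ (d + n) * U"
      using H by simp
  next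
    assume E: "(\<Sum>i=1..d. M ^ (i - 1) * R i) + (\<Sum>j=1..n. M ^ (d + j - 1) * (x j + s j)) + M ^ (d + n) * T
          = (\<Sum>i=1..d. M ^ (i - 1) * b i) + (\<Sum>j=1..n. M ^ (d + j - 1) * u j) + M ^ (d + n) * U"
    have L1: "(\<Sum>i=1..d. M ^ (i - 1) * R i) \<ge> - ((M ^ d - 1) * X)"
    proof -
      have "(\<Sum>i=1..d. M ^ (i - 1) * R i) \<ge> (\<Sum>i=1..d. - (M ^ (i - 1) * (M - 1) * X))"
      proof (rule sum_mono)
        fix i assume i: "i \<in> {1..d}"
        have "- ((M - 1) * X) \<le> - (D * X)" using MB DU0 B0 X0 by (intro le_imp_neg_le mult_right_mono) auto
        also have "- (D * X) \<le> R i" using absR[OF i] by linarith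
        finally have "M ^ (i - 1) * (- ((M - 1) * X)) \<le> M ^ (i - 1) * R i"
          using M0 by (intro mult_left_mono) auto
        then show "- (M ^ (i - 1) * (M - 1) * X) \<le> M ^ (i - 1) * R i" by (simp add: mult.assoc)
      qed
      also have "(\<Sum>i=1..d. - (M ^ (i - 1) * (M - 1) * X)) = - ((M ^ d - 1) * X)"
        using geomd by (simp add: sum_negf sum_distrib_right[symmetric])
      finally show ?thesis .
    qed
    have L2: "(\<Sum>j=1..n. M ^ (d + j - 1) * (x j + s j)) \<ge> M ^ d * X"
    proof -
      have "(\<Sum>j=1..n. M ^ (d + j - 1) * (x j + s j)) \<ge> (\<Sum>j=1..n. M ^ d * x j)"
      proof (rule sum_mono)
        fix j assume j: "j \<in> {1..n}"
        have "M ^ d \<le> M ^ (d + j - 1)" using M2 j by (intro power_increasing) auto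
        then show "M ^ d * x j \<le> M ^ (d + j - 1) * (x j + s j)"
          using x0[OF j] s0[OF j] M0 by (intro mult_mono) auto
      qed
      then show ?thesis unfolding X_def by (simp add: sum_distrib_left)
    qed
    have R1: "(\<Sum>i=1..d. M ^ (i - 1) * b i) \<le> M ^ d - 1"
    proof -
      have "(\<Sum>i=1..d. M ^ (i - 1) * b i) \<le> (\<Sum>i=1..d. M ^ (i - 1) * (M - 1))"
      proof (rule sum_mono)
        fix i assume i: "i \<in> {1..d}"
        have "b i \<le> M - 1" using hB[OF i] MB DU0 D1 by linarith
        then show "M ^ (i - 1) * b i \<le> M ^ (i - 1) * (M - 1)" using M0 by (intro mult_left_mono) auto
      qed
      then show ?thesis using geomd by simp
    qed
    have R2: "(\<Sum>j=1..n. M ^ (d + j - 1) * u j) \<le> M ^ d * (M ^ n - 1)"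
    proof -
      have "(\<Sum>j=1..n. M ^ (d + j - 1) * u j) \<le> (\<Sum>j=1..n. M ^ (d + j - 1) * (M - 1))"
      proof (rule sum_mono)
        fix j assume j: "j \<in> {1..n}"
        have "u j \<le> M - 1" using hUm[OF j] MUm DU0 D1 by linarith
        then show "M ^ (d + j - 1) * u j \<le> M ^ (d + j - 1) * (M - 1)" using M0 by (intro mult_left_mono) auto
      qed
      then show ?thesis using geomn by simp
    qed
    have pw: "M ^ (d + n) = M ^ d * M ^ n" by (simp add: power_add)
    have "M ^ (d + n) * T \<le> M ^ (d + n) * T + X" using X0 by linarith
    also have "\<dots> = - ((M ^ d - 1) * X) + M ^ d * X + M ^ (d + n) * T" by (simp add: algebra_simps)
    also have "\<dots> \<le> (\<Sum>i=1..d. M ^ (i - 1) * R i) + (\<Sum>j=1..n. M ^ (d + j - 1) * (x j + s j)) + M ^ (d + n) * T"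
      using L1 L2 by linarith
    also have "\<dots> \<le> M ^ d - 1 + M ^ d * (M ^ n - 1) + M ^ (d + n) * U"
      using E R1 R2 by linarith
    also have "\<dots> < M ^ (d + n) * (U + 1)" by (simp add: pw algebra_simps)
    finally have "M ^ (d + n) * T < M ^ (d + n) * (U + 1)" .
    then have TU: "T \<le> U" using M0 by (simp add: mult_less_cancel_left_pos)
    define c where "c k = (if k < d then R (Suc k) - b (Suc k)
        else if k < d + n then x (k - d + 1) + s (k - d + 1) - u (k - d + 1) else T - U)" for k
    have Y0: "Y \<ge> 0" using X0 XY by linarith
    have cb: "\<forall>k<d + n + 1. \<bar>c k\<bar> < M"
    proof (intro allI impI)
      fix k assume k: "k < d + n + 1"
      show "\<bar>c k\<bar> < M"
      proof (cases "k < d")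
        case True
        then have i: "Suc k \<in> {1..d}" by auto
        have "\<bar>R (Suc k)\<bar> \<le> D * U"
          using absR[OF i] XY YT TU D1 X0 order.trans mult_left_mono by (smt (verit))
        then show ?thesis using True hB[OF i] MB D1 unfolding c_def by (auto simp add: abs_le_iff abs_less_iff)
      next
        case False
        show ?thesis
        proof (cases "k < d + n")
          case True
          then have j: "k - d + 1 \<in> {1..n}" using False by auto
          then show ?thesis using False True yY[OF j] YT TU hUm[OF j] x0[OF j] s0[OF j] MUm DU D1 U0 Um0 unfolding c_def by (auto simp add: abs_le_iff abs_less_iff)
        next
          case False2: False
          then show ?thesis using False TU Y0 YT sn0 MUm DU D1 U0 Um0 unfolding c_def by (auto simp add: abs_le_iff abs_less_iff)
        qed
      qed
    qed
    have sum_c: "(\<Sum>k<d + n + 1. M ^ k * c k)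
      = ((\<Sum>i=1..d. M ^ (i - 1) * R i) + (\<Sum>j=1..n. M ^ (d + j - 1) * (x j + s j)) + M ^ (d + n) * T)
      - ((\<Sum>i=1..d. M ^ (i - 1) * b i) + (\<Sum>j=1..n. M ^ (d + j - 1) * u j) + M ^ (d + n) * U)"
    proof -
      have s1: "(\<Sum>k<d. M ^ k * c k) = (\<Sum>i=1..d. M ^ (i - 1) * R i) - (\<Sum>i=1..d. M ^ (i - 1) * b i)"
      proof -
        have "(\<Sum>k<d. M ^ k * c k) = (\<Sum>k<d. M ^ (Suc k - 1) * (R (Suc k) - b (Suc k)))"
          by (rule sum.cong) (auto simp: c_def)
        also have "\<dots> = (\<Sum>i=1..d. M ^ (i - 1) * (R i - b i))"
          using sum.atLeast1_atMost_eq[of "\<lambda>i. M ^ (i - 1) * (R i - b i)" d] by simp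
        also have "\<dots> = (\<Sum>i=1..d. M ^ (i - 1) * R i) - (\<Sum>i=1..d. M ^ (i - 1) * b i)"
          by (simp add: right_diff_distrib sum_subtractf)
        finally show ?thesis .
      qed
      have s2: "(\<Sum>k\<in>{d..<d+n}. M ^ k * c k) = (\<Sum>j=1..n. M ^ (d + j - 1) * (x j + s j)) - (\<Sum>j=1..n. M ^ (d + j - 1) * u j)"
      proof -
        have "(\<Sum>k\<in>{d..<d+n}. M ^ k * c k) = (\<Sum>k\<in>{0+d..<n+d}. M ^ k * c k)" by (simp add: add.commute)
        also have "\<dots> = (\<Sum>k\<in>{0..<n}. M ^ (k + d) * c (k + d))" by (rule sum.shift_bounds_nat_ivl)
        also have "\<dots> = (\<Sum>k<n. M ^ (d + Suc k - 1) * (x (Suc k) + s (Suc k) - u (Suc k)))"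
          unfolding atLeast0LessThan by (rule sum.cong) (auto simp: c_def add.commute)
        also have "\<dots> = (\<Sum>j=1..n. M ^ (d + j - 1) * (x j + s j - u j))"
          using sum.atLeast1_atMost_eq[of "\<lambda>j. M ^ (d + j - 1) * (x j + s j - u j)" n] by simp
        also have "\<dots> = (\<Sum>j=1..n. M ^ (d + j - 1) * (x j + s j)) - (\<Sum>j=1..n. M ^ (d + j - 1) * u j)"
          by (simp add: right_diff_distrib sum_subtractf)
        finally show ?thesis .
      qed
      have "(\<Sum>k<d + n + 1. M ^ k * c k) = (\<Sum>k<d + n. M ^ k * c k) + M ^ (d + n) * c (d + n)"
        by simp
      also have "(\<Sum>k<d + n. M ^ k * c k) = (\<Sum>k<d. M ^ k * c k) + (\<Sum>k\<in>{d..<d+n}. M ^ k * c k)"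
        using sum.atLeastLessThan_concat[of 0 d "d+n" "\<lambda>k. M ^ k * c k"] by (simp add: atLeast0LessThan)
      also have "c (d + n) = T - U" by (simp add: c_def)
      finally show ?thesis using s1 s2 by (simp add: right_diff_distrib)
    qed
    have "(\<Sum>k<d + n + 1. M ^ k * c k) = 0" using sum_c E by simp
    then have c0: "\<forall>k<d + n + 1. c k = 0" using digits[OF M2 cb] by blast
    have "\<forall>i\<in>{1..d}. R i = b i"
    proof
      fix i assume i: "i \<in> {1..d}"
      then have "c (i - 1) = 0" using c0 by auto
      moreover have "i - 1 < d" "Suc (i - 1) = i" using i by auto
      ultimately show "R i = b i" unfolding c_def by simp
    qed
    moreover have "\<forall>j\<in>{1..n}. x j + s j = u j"
    proof
      fix j assume j: "j \<in> {1..n}"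
      then have "c (d + j - 1) = 0" using c0 by auto
      moreover have "d + j - 1 - d + 1 = j" using j by auto
      moreover have "\<not> d + j - 1 < d" "d + j - 1 < d + n" using j by auto
      ultimately show "x j + s j = u j" unfolding c_def by simp
    qed
    moreover have "T = U" using c0[rule_format, of "d + n"] unfolding c_def by simp
    ultimately show "(\<forall>i\<in>{1..d}. R i = b i) \<and> (\<forall>j\<in>{1..n}. x j + s j = u j) \<and> T = U" by blast
  qed
  then show ?thesis unfolding R_def T_def Y_def .
qed

end
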